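(* Let $\omega$ be a quasi-free Hadamard state of the free massless scalar field on four-dimensional Minkowski spacetime, and let $x$ be a point of Minkowski spacetime. Then $\omega$ is $\mathbf{T}_{2n}(x)$-thermal for all integers $n\geq 1$ if and only if it is $\mathbf{T}_{2}(x)$-thermal. As a consequence, a $\mathbf{T}_2(x)$-thermal quasi-free state has a sharp local temperature at $x$: any probability measure $\rho_x$ on $(0,\infty)$ witnessing its $\mathbf{T}_4(x)$-thermality is a Dirac measure.
   Context: Consider the free massless scalar field $\phi$ on Minkowski spacetime (signature $(-,+,+,+)$, units $k_B=1$). For $k\geq 0$ let $:\!\phi^{k}\!:(x)$ denote the Wick powers, defined by point splitting/normal ordering with respect to the Hadamard parametrix (in Minkowski spacetime no curvature renormalization terms appear). A state $\omega$ is quasi-free if its odd $n$-point functions vanish and its $2n$-point functions are given by the sum over all pairings of products of two-point functions; in a quasi-free Hadamard state $\omega(:\!\phi^{2n}\!:(x))=(2n-1)!!\,\omega(:\!\phi^2\!:(x))^n$. For $\beta>0$ let $\omega_\beta$ denote the (unique, quasi-free, translation-invariant) global thermal equilibrium (KMS) state at inverse temperature $\beta$ in a fixed Lorentz frame; it satisfies $\omega_\beta(:\!\phi^{2n}\!:(0))=\frac{(2n-1)!!}{12^n\beta^{2n}}$. For an integer $n\geq0$ let $\mathbf{T}_{2n}=\{\mathbf{1},:\!\phi^2\!:,\dots,:\!\phi^{2n}\!:\}$. A state $\omega$ is called $\mathbf{T}_{2n}(x)$-thermal if there exists a probability measure $\rho_x$ on $(0,\infty)$ such that $\omega(:\!\phi^{2k}\!:(x))=\int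 d\rho_x(\beta)\,\omega_\beta(:\!\phi^{2k}\!:(0))$ for all $k=0,1,\dots,n$ (with the integrals finite). The state is said to have a sharp local temperature at $x$ if the measure $\rho_x$ is a Dirac measure. *)

theory Defs
  imports "HOL-Probability.Probability"
begin

type_synonym mink_point = "real ^ 4"

text \<open>Odd double factorial: dfact_odd n = (2n-1)!!, with (-1)!! = 1.\<close>
definition dfact_odd :: "nat \<Rightarrow> real" where
  "dfact_odd n = (\<Prod>i<n. real (2 * i + 1))"

text \<open>A state is represented by its expectation values of the Wick powers:
  omega k x = omega(:phi^k:(x)).\<close>
type_synonym wick_state = "nat \<Rightarrow> mink_point \<Rightarrow> real"

text \<open>Consequences of quasi-freeness (with Hadamard point-split Wick powers) for the
  Wick-power expectation values at every point.\<close>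
definition quasi_free_hadamard :: "wick_state \<Rightarrow> bool" where
  "quasi_free_hadamard \<omega> \<longleftrightarrow>
     (\<forall>x n. \<omega> (2 * n) x = dfact_odd n * (\<omega> 2 x) ^ n) \<and>
     (\<forall>x n. \<omega> (2 * n + 1) x = 0)"

text \<open>KMS state value: omega_beta(:phi^(2k):(0)) = (2k-1)!! / (12^k beta^(2k)).\<close>
definition kms_wick :: "real \<Rightarrow> nat \<Rightarrow> real" where
  "kms_wick \<beta> k = dfact_odd k / (12 ^ k * \<beta> ^ (2 * k))"

definition pos_reals :: "real measure" where
  "pos_reals = restrict_space borel {0<..}"

definition thermal_witness :: "wick_state \<Rightarrow> mink_point \<Rightarrow> nat \<Rightarrow> real measure \<Rightarrow> bool" where
  "thermal_witness \<omega> x n \<rho> \<longleftrightarrow>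
     prob_space \<rho> \<and> sets \<rho> = sets pos_reals \<and>
     (\<forall>k\<le>n. integrable \<rho> (\<lambda>\<beta>. kms_wick \<beta> k) \<and>
             \<omega> (2 * k) x = (\<integral>\<beta>. kms_wick \<beta> k \<partial>\<rho>))"

definition T_thermal :: "wick_state \<Rightarrow> mink_point \<Rightarrow> nat \<Rightarrow> bool" where
  "T_thermal \<omega> x n \<longleftrightarrow> (\<exists>\<rho>. thermal_witness \<omega> x n \<rho>)"

definition is_dirac :: "real measure \<Rightarrow> bool" where
  "is_dirac \<rho> \<longleftrightarrow> (\<exists>\<beta>0>0. \<rho> = return pos_reals \<beta>0)"

end

theory Submission
  imports Defs
begin

lemma dfact_odd_0[simp]: "dfact_odd 0 = 1" by (simp add: dfact_odd_def)
lemma dfact_odd_1[simp]: "dfact_odd 1 = 1" by (simp add: dfact_odd_def)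
lemma dfact_odd_2[simp]: "dfact_odd 2 = 3" by (simp add: dfact_odd_def numeral_2_eq_2)

lemma kms_meas: assumes "sets M = sets pos_reals"
  shows "(\<lambda>\<beta>. kms_wick \<beta> k) \<in> borel_measurable M"
proof -
  have "(\<lambda>\<beta>. kms_wick \<beta> k) \<in> borel_measurable borel"
    unfolding kms_wick_def by measurable
  hence "(\<lambda>\<beta>. kms_wick \<beta> k) \<in> borel_measurable pos_reals"
    unfolding pos_reals_def by (rule measurable_restrict_space1)
  thus ?thesis using measurable_cong_sets[OF assms refl] by blast
qed

lemma space_pos: "space pos_reals = {0<..}"
  by (simp add: pos_reals_def space_restrict_space)

lemma dirac_witness:
  assumes qf: "quasi_free_hadamard \<omega>" and u: "\<omega> 2 x > 0"
  shows "thermal_witness \<omega> x n (return pos_reals (sqrt (1 / (12 * \<omega> 2 x))))"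
proof -
  define u where "u = \<omega> 2 x"
  define b where "b = sqrt (1 / (12 * u))"
  have bpos: "b > 0" using u by (simp add: b_def u_def)
  have bsq: "b^2 = 1 / (12 * u)" using u by (simp add: b_def u_def)
  have bsp: "b \<in> space pos_reals" using bpos by (simp add: space_pos)
  interpret P: prob_space "return pos_reals b" by (rule prob_space_return[OF bsp])
  have val: "kms_wick b k = dfact_odd k * u ^ k" for k
  proof -
    have "12 ^ k * b ^ (2 * k) = (12 * b^2) ^ k"
      by (simp add: power_mult power_mult_distrib)
    also have "\<dots> = (1/u) ^ k" using u bsq by (simp add: u_def)
    finally show ?thesis using u by (simp add: kms_wick_def u_def power_divide)
  qed
  have "thermal_witness \<omega> x n (return pos_reals b)"
    unfolding thermal_witness_def
  proof (intro conjI allI impI)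
    show "prob_space (return pos_reals b)" by (rule prob_space_return[OF bsp])
    show "sets (return pos_reals b) = sets pos_reals" by simp
  next
    fix k assume "k \<le> n"
    have km[measurable]: "(\<lambda>\<beta>. kms_wick \<beta> k) \<in> borel_measurable pos_reals"
      by (rule kms_meas) simp
    have pr: "Measurable.pred pos_reals (\<lambda>y. norm (kms_wick y k) \<le> norm (kms_wick b k))"
      by measurable
    have ae: "AE y in return pos_reals b. norm (kms_wick y k) \<le> norm (kms_wick b k)"
      using AE_return[OF bsp pr] by simp
    show "integrable (return pos_reals b) (\<lambda>\<beta>. kms_wick \<beta> k)"
      by (rule P.integrable_const_bound[OF ae]) (rule kms_meas, simp)
    show "\<omega> (2 * k) x = (\<integral>\<beta>. kms_wick \<beta> k \<partial>return pos_reals b)"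
      using qf bsp by (simp add: integral_return[OF bsp kms_meas] val quasi_free_hadamard_def u_def)
  qed
  thus ?thesis by (simp add: b_def u_def)
qed

lemma kms1: "kms_wick \<beta> 1 = 1 / (12 * \<beta>^2)" by (simp add: kms_wick_def dfact_odd_def)
lemma kms1': "kms_wick \<beta> (Suc 0) = 1 / (12 * \<beta>^2)" using kms1 by simp
lemma kms2: "kms_wick \<beta> 2 = 3 * (1 / (12 * \<beta>^2))^2"
  by (simp add: kms_wick_def power_divide power_mult_distrib flip: power_mult)

lemma witness_mono: "thermal_witness \<omega> x n \<rho> \<Longrightarrow> m \<le> n \<Longrightarrow> thermal_witness \<omega> x m \<rho>"
  unfolding thermal_witness_def by auto

lemma space_wit: "thermal_witness \<omega> x n \<rho> \<Longrightarrow> space \<rho> = {0<..}"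
  unfolding thermal_witness_def using sets_eq_imp_space_eq space_pos by metis

lemma T1_pos:
  assumes w: "thermal_witness \<omega> x 1 \<rho>"
  shows "\<omega> 2 x > 0"
proof -
  interpret prob_space \<rho> using w by (simp add: thermal_witness_def)
  have sp: "space \<rho> = {0<..}" by (rule space_wit[OF w])
  have int: "integrable \<rho> (\<lambda>\<beta>. kms_wick \<beta> 1)" and eq: "\<omega> 2 x = (\<integral>\<beta>. kms_wick \<beta> 1 \<partial>\<rho>)"
    using w unfolding thermal_witness_def by auto
  have pos: "AE \<beta> in \<rho>. kms_wick \<beta> 1 > 0"
    by (rule AE_I2) (simp add: sp kms1')
  have nn: "AE \<beta> in \<rho>. 0 \<le> kms_wick \<beta> 1" using pos by eventually_elim simp
  have ge: "\<omega> 2 x \<ge> 0" unfolding eq by (rule integral_nonneg_AE[OF nn])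
  have "\<omega> 2 x \<noteq> 0"
  proof
    assume "\<omega> 2 x = 0"
    hence "AE \<beta> in \<rho>. kms_wick \<beta> 1 = 0" using integral_nonneg_eq_0_iff_AE[OF int nn] eq by simp
    with pos have "AE \<beta> in \<rho>. False" by eventually_elim simp
    thus False by (simp add: AE_False)
  qed
  with ge show ?thesis by simp
qed

lemma dirac:
  assumes qf: "quasi_free_hadamard \<omega>" and w: "thermal_witness \<omega> x 2 \<rho>"
  shows "is_dirac \<rho>"
proof -
  interpret prob_space \<rho> using w by (simp add: thermal_witness_def)
  have sp: "space \<rho> = {0<..}" by (rule space_wit[OF w])
  have sets: "sets \<rho> = sets pos_reals" using w by (simp add: thermal_witness_def)
  define u where "u = \<omega> 2 x"
  have u: "u > 0" unfolding u_def by (rule T1_pos[OF witness_mono[OF w]]) simp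
  define Y where "Y = (\<lambda>\<beta>::real. 1 / (12 * \<beta>^2))"
  have h: "\<forall>k\<le>2. integrable \<rho> (\<lambda>\<beta>. kms_wick \<beta> k) \<and> \<omega> (2 * k) x = (\<integral>\<beta>. kms_wick \<beta> k \<partial>\<rho>)"
    using w unfolding thermal_witness_def by blast
  have Y1: "(\<lambda>\<beta>. kms_wick \<beta> 1) = Y" by (simp add: Y_def kms1')
  have Y2: "(\<lambda>\<beta>. kms_wick \<beta> 2) = (\<lambda>\<beta>. 3 * (Y \<beta>)^2)" by (simp add: Y_def kms2)
  have h1: "integrable \<rho> (\<lambda>\<beta>. kms_wick \<beta> 1) \<and> \<omega> (2 * 1) x = (\<integral>\<beta>. kms_wick \<beta> 1 \<partial>\<rho>)"
    by (rule h[rule_format]) simp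
  have h2: "integrable \<rho> (\<lambda>\<beta>. kms_wick \<beta> 2) \<and> \<omega> (2 * 2) x = (\<integral>\<beta>. kms_wick \<beta> 2 \<partial>\<rho>)"
    by (rule h[rule_format]) simp
  have i1: "integrable \<rho> Y" and e1: "(\<integral>\<beta>. Y \<beta> \<partial>\<rho>) = u"
    using h1 unfolding Y1 u_def by auto
  have i2': "integrable \<rho> (\<lambda>\<beta>. 3 * (Y \<beta>)^2)" and e2': "(\<integral>\<beta>. 3 * (Y \<beta>)^2 \<partial>\<rho>) = \<omega> 4 x"
    using h2 unfolding Y2 by auto
  have i2: "integrable \<rho> (\<lambda>\<beta>. (Y \<beta>)^2)"
    using integrable_mult_right[OF i2', of "1/3"] by simp
  have "\<omega> (2*2) x = dfact_odd 2 * (\<omega> 2 x)^2" using qf unfolding quasi_free_hadamard_def by blast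
  hence "\<omega> 4 x = 3 * u^2" by (simp add: u_def)
  hence e2: "(\<integral>\<beta>. (Y \<beta>)^2 \<partial>\<rho>) = u^2" using e2' by simp
  have iv: "integrable \<rho> (\<lambda>\<beta>. (Y \<beta>)^2 - 2 * u * Y \<beta> + u^2)"
    by (intro Bochner_Integration.integrable_add Bochner_Integration.integrable_diff
        integrable_mult_right i1 i2 integrable_const)
  have ia: "integrable \<rho> (\<lambda>\<beta>. (Y \<beta>)^2 - 2 * u * Y \<beta>)"
    by (intro Bochner_Integration.integrable_diff integrable_mult_right i1 i2)
  have "(\<integral>\<beta>. (Y \<beta>)^2 - 2 * u * Y \<beta> + u^2 \<partial>\<rho>)
      = (\<integral>\<beta>. (Y \<beta>)^2 - 2 * u * Y \<beta> \<partial>\<rho>) + (\<integral>\<beta>. u^2 \<partial>\<rho>)"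
    by (rule Bochner_Integration.integral_add[OF ia integrable_const])
  also have "(\<integral>\<beta>. (Y \<beta>)^2 - 2 * u * Y \<beta> \<partial>\<rho>) = (\<integral>\<beta>. (Y \<beta>)^2 \<partial>\<rho>) - (\<integral>\<beta>. 2 * u * Y \<beta> \<partial>\<rho>)"
    by (rule Bochner_Integration.integral_diff[OF i2 integrable_mult_right[OF i1]])
  also have "(\<integral>\<beta>. 2 * u * Y \<beta> \<partial>\<rho>) = 2 * u * (\<integral>\<beta>. Y \<beta> \<partial>\<rho>)"
    by (rule integral_mult_right_zero)
  also have "(\<integral>\<beta>. u^2 \<partial>\<rho>) = u^2" by (simp add: prob_space)
  finally have "(\<integral>\<beta>. (Y \<beta>)^2 - 2 * u * Y \<beta> + u^2 \<partial>\<rho>) = u^2 - 2*u*u + u^2"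
    by (simp add: e1 e2)
  hence z: "(\<integral>\<beta>. (Y \<beta>)^2 - 2 * u * Y \<beta> + u^2 \<partial>\<rho>) = 0" by (simp add: power2_eq_square)
  have sq: "(Y \<beta>)^2 - 2 * u * Y \<beta> + u^2 = (Y \<beta> - u)^2" for \<beta> by (simp add: power2_eq_square algebra_simps)
  have "AE \<beta> in \<rho>. (Y \<beta>)^2 - 2 * u * Y \<beta> + u^2 = 0"
    using integral_nonneg_eq_0_iff_AE[OF iv] z by (simp add: sq)
  hence ae0: "AE \<beta> in \<rho>. Y \<beta> = u" by (simp add: sq)
  define b where "b = sqrt (1 / (12 * u))"
  have bpos: "b > 0" using u by (simp add: b_def)
  have aeb: "AE \<beta> in \<rho>. \<beta> = b"
    using ae0 AE_space
  proof eventually_elim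
    case (elim \<beta>)
    hence bp: "\<beta> > 0" and "1 / (12 * \<beta>^2) = u" using sp by (auto simp: Y_def)
    hence "\<beta>^2 = 1 / (12 * u)" using u by (auto simp: field_simps)
    hence "b = sqrt (\<beta>^2)" unfolding b_def by simp
    thus ?case using bp by simp
  qed
  have bsp: "b \<in> space pos_reals" using bpos by (simp add: space_pos)
  have "\<rho> = return pos_reals b"
  proof (rule measure_eqI)
    show "sets \<rho> = sets (return pos_reals b)" using sets by simp
  next
    fix A assume A: "A \<in> sets \<rho>"
    hence A': "A \<in> sets pos_reals" using sets by simp
    show "emeasure \<rho> A = emeasure (return pos_reals b) A"
    proof (cases "b \<in> A")
      case True
      have "emeasure \<rho> A = emeasure \<rho> (space \<rho>)"
        by (rule emeasure_eq_AE) (use aeb True A in auto)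
      thus ?thesis using True A' by (simp add: emeasure_space_1)
    next
      case False
      have "emeasure \<rho> A = emeasure \<rho> {}"
        by (rule emeasure_eq_AE) (use aeb False A in auto)
      thus ?thesis using False A' by simp
    qed
  qed
  thus ?thesis unfolding is_dirac_def using bpos by blast
qed

theorem proposition1:
  fixes \<omega> :: wick_state and x :: mink_point
  assumes "quasi_free_hadamard \<omega>"
  shows "((\<forall>n\<ge>1. T_thermal \<omega> x n) \<longleftrightarrow> T_thermal \<omega> x 1) \<and>
         (T_thermal \<omega> x 1 \<longrightarrow>
            T_thermal \<omega> x 2 \<and> (\<forall>\<rho>. thermal_witness \<omega> x 2 \<rho> \<longrightarrow> is_dirac \<rho>))"
proof -
  have all: "T_thermal \<omega> x n" if T1: "T_thermal \<omega> x 1" for n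
  proof -
    obtain \<rho> where "thermal_witness \<omega> x 1 \<rho>" using T1 unfolding T_thermal_def by blast
    hence "\<omega> 2 x > 0" by (rule T1_pos)
    thus ?thesis unfolding T_thermal_def using dirac_witness[OF assms] by blast
  qed
  show ?thesis using all dirac[OF assms] by blast
qed

end
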